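(* For real $\eta\ge0$ let $$w(\eta)=\frac{1}{8}\mathbb{I}+\frac{\eta}{4}\Big(V_{(AB)}-\tfrac{\mathbb{I}}{2}\Big)+\frac{\eta}{4}\Big(V_{(AC)}-\tfrac{\mathbb{I}}{2}\Big)+\frac{\eta}{4}\Big(V_{(BC)}-\tfrac{\mathbb{I}}{2}\Big)$$ on $(\mathbb{C}^2)^{\otimes3}$. Then $w(\eta)$ is local-positive if and only if $\eta\le\frac{2}{3}$. Moreover each bipartite reduction of $w(\eta)$ equals $(1-\eta)\frac{\mathbb{I}}{4}+\eta\frac{V}{2}$.
   Context: $V_{(XY)}$ swaps tensor factors $X,Y\in\{A,B,C\}$; $V$ is the swap on $\mathbb{C}^2\otimes\mathbb{C}^2$. An operator $M$ on $(\mathbb{C}^2)^{\otimes3}$ is local-positive if $\langle\psi_1\psi_2\psi_3|M|\psi_1\psi_2\psi_3\rangle\ge0$ for all unit vectors $\psi_i\in\mathbb{C}^2$. *)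

theory Defs
  imports Complex_Main "HOL-Library.Complex_Order"
begin

text \<open>Computational basis of (C^2)^{\<otimes>3} is indexed by triples (a,b,c) of bools
  (factor order A,B,C); of C^2 \<otimes> C^2 by pairs. An operator is given by its
  matrix entries: M x y = <x|M|y>.\<close>

type_synonym op3 = "bool \<times> bool \<times> bool \<Rightarrow> bool \<times> bool \<times> bool \<Rightarrow> complex"
type_synonym op2 = "bool \<times> bool \<Rightarrow> bool \<times> bool \<Rightarrow> complex"

definition ident3 :: op3 where
  "ident3 x y = (if x = y then 1 else 0)"

definition swapAB :: op3 where
  "swapAB x y = (case y of (a,b,c) \<Rightarrow> if x = (b,a,c) then 1 else 0)"

definition swapAC :: op3 where
  "swapAC x y = (case y of (a,b,c) \<Rightarrow> if x = (c,b,a) then 1 else 0)"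

definition swapBC :: op3 where
  "swapBC x y = (case y of (a,b,c) \<Rightarrow> if x = (a,c,b) then 1 else 0)"

definition ident2 :: op2 where
  "ident2 x y = (if x = y then 1 else 0)"

definition swap2 :: op2 where
  "swap2 x y = (case y of (a,b) \<Rightarrow> if x = (b,a) then 1 else 0)"

definition w :: "real \<Rightarrow> op3" where
  "w \<eta> x y = ident3 x y / 8
     + complex_of_real (\<eta> / 4) * (swapAB x y - ident3 x y / 2)
     + complex_of_real (\<eta> / 4) * (swapAC x y - ident3 x y / 2)
     + complex_of_real (\<eta> / 4) * (swapBC x y - ident3 x y / 2)"

definition unit_vec :: "(bool \<Rightarrow> complex) \<Rightarrow> bool" where
  "unit_vec \<psi> \<longleftrightarrow> (\<Sum>i\<in>UNIV. (cmod (\<psi> i))\<^sup>2) = 1"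

definition prod_state :: "(bool \<Rightarrow> complex) \<Rightarrow> (bool \<Rightarrow> complex) \<Rightarrow> (bool \<Rightarrow> complex)
    \<Rightarrow> bool \<times> bool \<times> bool \<Rightarrow> complex" where
  "prod_state \<psi>1 \<psi>2 \<psi>3 x = (case x of (a,b,c) \<Rightarrow> \<psi>1 a * \<psi>2 b * \<psi>3 c)"

definition expect3 :: "op3 \<Rightarrow> (bool \<times> bool \<times> bool \<Rightarrow> complex) \<Rightarrow> complex" where
  "expect3 M \<phi> = (\<Sum>x\<in>UNIV. \<Sum>y\<in>UNIV. cnj (\<phi> x) * M x y * \<phi> y)"

definition local_positive :: "op3 \<Rightarrow> bool" where
  "local_positive M \<longleftrightarrow> (\<forall>\<psi>1 \<psi>2 \<psi>3. unit_vec \<psi>1 \<longrightarrow> unit_vec \<psi>2 \<longrightarrow> unit_vec \<psi>3 \<longrightarrow>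
      0 \<le> expect3 M (prod_state \<psi>1 \<psi>2 \<psi>3))"

definition ptrA :: "op3 \<Rightarrow> op2" where
  "ptrA M x y = (case x of (b,c) \<Rightarrow> case y of (b',c') \<Rightarrow> \<Sum>a\<in>UNIV. M (a,b,c) (a,b',c'))"

definition ptrB :: "op3 \<Rightarrow> op2" where
  "ptrB M x y = (case x of (a,c) \<Rightarrow> case y of (a',c') \<Rightarrow> \<Sum>b\<in>UNIV. M (a,b,c) (a',b,c'))"

definition ptrC :: "op3 \<Rightarrow> op2" where
  "ptrC M x y = (case x of (a,b) \<Rightarrow> case y of (a',b') \<Rightarrow> \<Sum>c\<in>UNIV. M (a,b,c) (a',b',c))"

definition werner2 :: "real \<Rightarrow> op2" where
  "werner2 \<eta> x y = complex_of_real (1 - \<eta>) * ident2 x y / 4 + complex_of_real \<eta> * swap2 x y / 2"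

end

theory Submission imports Defs begin
lemma sum3: "(\<Sum>x\<in>(UNIV::(bool\<times>bool\<times>bool) set). f x) =
  f (True,True,True) + f (True,True,False) + f (True,False,True) + f (True,False,False) +
  f (False,True,True) + f (False,True,False) + f (False,False,True) + f (False,False,False)"
proof -
  have eq: "(UNIV::(bool\<times>bool\<times>bool) set) = {(True,True,True),(True,True,False),(True,False,True),(True,False,False),
    (False,True,True),(False,True,False),(False,False,True),(False,False,False)}" (is "_ = ?S") by auto
  have "sum f UNIV = sum f ?S" by (subst eq, rule refl)
  then show ?thesis by (simp add: algebra_simps)
qed

lemma expect_lin: "expect3 (\<lambda>x y. a * M1 x y + b * M2 x y + c * M3 x y + d * M4 x y) \<phi>
  = a * expect3 M1 \<phi> + b * expect3 M2 \<phi> + c * expect3 M3 \<phi> + d * expect3 M4 \<phi>"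
  unfolding expect3_def by (simp add: sum_distrib_left sum.distrib algebra_simps)

context fixes x1 y1 x2 y2 x3 y3 :: complex begin
abbreviation "phi \<equiv> prod_state (\<lambda>b. if b then x1 else y1) (\<lambda>b. if b then x2 else y2) (\<lambda>b. if b then x3 else y3)"
lemma e_id: "expect3 ident3 phi = (x1 * cnj x1 + y1 * cnj y1) * (x2 * cnj x2 + y2 * cnj y2) * (x3 * cnj x3 + y3 * cnj y3)"
  unfolding expect3_def sum3 ident3_def prod_state_def by (simp add: algebra_simps)
lemma e_AB: "expect3 swapAB phi = (cnj x1 * x2 + cnj y1 * y2) * cnj (cnj x1 * x2 + cnj y1 * y2) * (x3 * cnj x3 + y3 * cnj y3)"
  unfolding expect3_def sum3 swapAB_def prod_state_def by (simp add: algebra_simps)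
lemma e_AC: "expect3 swapAC phi = (cnj x1 * x3 + cnj y1 * y3) * cnj (cnj x1 * x3 + cnj y1 * y3) * (x2 * cnj x2 + y2 * cnj y2)"
  unfolding expect3_def sum3 swapAC_def prod_state_def by (simp add: algebra_simps)
lemma e_BC: "expect3 swapBC phi = (cnj x2 * x3 + cnj y2 * y3) * cnj (cnj x2 * x3 + cnj y2 * y3) * (x1 * cnj x1 + y1 * cnj y1)"
  unfolding expect3_def sum3 swapBC_def prod_state_def by (simp add: algebra_simps)
end

lemma ptr_ok: "ptrA (w \<eta>) = werner2 \<eta> \<and> ptrB (w \<eta>) = werner2 \<eta> \<and> ptrC (w \<eta>) = werner2 \<eta>"
  unfolding ptrA_def ptrB_def ptrC_def
  by (auto simp: fun_eq_iff UNIV_bool w_def werner2_def ident3_def ident2_def swapAB_def swapAC_def swapBC_def swap2_def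
      split: prod.splits; simp add: field_simps)

definition "bl1 x y = 2 * Re (cnj x * y)"
definition "bl2 x y = 2 * Im (cnj x * y)"
definition "bl3 x y = (cmod x)^2 - (cmod y)^2"

lemma bloch_dot: "2 * (cmod (cnj x * x' + cnj y * y'))^2 =
   ((cmod x)^2 + (cmod y)^2) * ((cmod x')^2 + (cmod y')^2) + bl1 x y * bl1 x' y' + bl2 x y * bl2 x' y' + bl3 x y * bl3 x' y'"
  unfolding bl1_def bl2_def bl3_def cmod_power2 by (simp add: power2_eq_square algebra_simps)

lemma bloch_norm: "(bl1 x y)^2 + (bl2 x y)^2 + (bl3 x y)^2 = ((cmod x)^2 + (cmod y)^2)^2"
  unfolding bl1_def bl2_def bl3_def cmod_power2 by (simp add: power2_eq_square algebra_simps)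

lemma real_key:
  fixes pA pB pC qA qB qC sA sB sC t12 t13 t23 :: real
  assumes "pA^2+qA^2+sA^2 = 1" "pB^2+qB^2+sB^2 = 1" "pC^2+qC^2+sC^2 = 1"
   "2*t12 = 1 + pA*pB+qA*qB+sA*sB" "2*t13 = 1 + pA*pC+qA*qC+sA*sC" "2*t23 = 1 + pB*pC+qB*qC+sB*sC"
  shows "3/4 \<le> t12 + t13 + t23"
proof -
  have "0 \<le> (pA+pB+pC)^2+(qA+qB+qC)^2+(sA+sB+sC)^2" by simp
  also have "\<dots> = (pA^2+qA^2+sA^2) + (pB^2+qB^2+sB^2) + (pC^2+qC^2+sC^2)
     + 2*(pA*pB+qA*qB+sA*sB) + 2*(pA*pC+qA*qC+sA*sC) + 2*(pB*pC+qB*qC+sB*sC)"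
    by (simp add: power2_eq_square algebra_simps)
  also have "\<dots> = 3 + 2*(2*t12-1) + 2*(2*t13-1) + 2*(2*t23-1)" using assms by simp
  finally show ?thesis by (simp add: algebra_simps)
qed


lemma w_split: "w \<eta> = (\<lambda>x y. complex_of_real (1/8 - 3*\<eta>/8) * ident3 x y + complex_of_real (\<eta>/4) * swapAB x y
   + complex_of_real (\<eta>/4) * swapAC x y + complex_of_real (\<eta>/4) * swapBC x y)"
  unfolding w_def by (auto simp: fun_eq_iff algebra_simps)

lemma psi_eta: "\<psi> = (\<lambda>b. if b then \<psi> True else \<psi> False)"
  by (auto simp: fun_eq_iff)


lemma unit_iff: "unit_vec \<psi> \<longleftrightarrow> (cmod (\<psi> True))^2 + (cmod (\<psi> False))^2 = 1"
  unfolding unit_vec_def by (simp add: UNIV_bool add.commute)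

lemma gen3: "(A::complex)*(N1*N2*N3) + B*(T12*N3) + B*(T13*N2) + B*(T23*N1) = A*N1*N2*N3 + B*(T12*N3+T13*N2+T23*N1)"
  by (simp add: algebra_simps)

lemma expect_w:
  "expect3 (w \<eta>) (prod_state \<psi>1 \<psi>2 \<psi>3) =
    complex_of_real ((1/8 - 3*\<eta>/8) * ((cmod (\<psi>1 True))^2 + (cmod (\<psi>1 False))^2)
      * ((cmod (\<psi>2 True))^2 + (cmod (\<psi>2 False))^2) * ((cmod (\<psi>3 True))^2 + (cmod (\<psi>3 False))^2)
     + \<eta>/4 * ((cmod (cnj (\<psi>1 True) * \<psi>2 True + cnj (\<psi>1 False) * \<psi>2 False))^2 * ((cmod (\<psi>3 True))^2 + (cmod (\<psi>3 False))^2)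
       + (cmod (cnj (\<psi>1 True) * \<psi>3 True + cnj (\<psi>1 False) * \<psi>3 False))^2 * ((cmod (\<psi>2 True))^2 + (cmod (\<psi>2 False))^2)
       + (cmod (cnj (\<psi>2 True) * \<psi>3 True + cnj (\<psi>2 False) * \<psi>3 False))^2 * ((cmod (\<psi>1 True))^2 + (cmod (\<psi>1 False))^2)))"
proof -
  have ps: "prod_state \<psi>1 \<psi>2 \<psi>3 = phi (\<psi>1 True) (\<psi>1 False) (\<psi>2 True) (\<psi>2 False) (\<psi>3 True) (\<psi>3 False)"
    by (subst psi_eta[of \<psi>1], subst psi_eta[of \<psi>2], subst psi_eta[of \<psi>3], rule refl)
  show ?thesis
    unfolding ps w_split expect_lin
    apply (simp only: e_id e_AB e_AC e_BC of_real_add of_real_mult complex_norm_square)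
    by (rule gen3)
qed


lemma ofreal_nn: "(0::complex) \<le> complex_of_real r \<longleftrightarrow> 0 \<le> r"
  by (simp add: less_eq_complex_def)

lemma overlap_bound:
  assumes "unit_vec \<psi>1" "unit_vec \<psi>2" "unit_vec \<psi>3"
  shows "3/4 \<le> (cmod (cnj (\<psi>1 True) * \<psi>2 True + cnj (\<psi>1 False) * \<psi>2 False))^2
       + (cmod (cnj (\<psi>1 True) * \<psi>3 True + cnj (\<psi>1 False) * \<psi>3 False))^2
       + (cmod (cnj (\<psi>2 True) * \<psi>3 True + cnj (\<psi>2 False) * \<psi>3 False))^2"
proof -
  have u: "(cmod (\<psi>1 True))^2 + (cmod (\<psi>1 False))^2 = 1" "(cmod (\<psi>2 True))^2 + (cmod (\<psi>2 False))^2 = 1"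
    "(cmod (\<psi>3 True))^2 + (cmod (\<psi>3 False))^2 = 1" using assms unit_iff by auto
  show ?thesis
    apply (rule real_key[where pA = "bl1 (\<psi>1 True) (\<psi>1 False)" and qA = "bl2 (\<psi>1 True) (\<psi>1 False)" and sA = "bl3 (\<psi>1 True) (\<psi>1 False)"
       and pB = "bl1 (\<psi>2 True) (\<psi>2 False)" and qB = "bl2 (\<psi>2 True) (\<psi>2 False)" and sB = "bl3 (\<psi>2 True) (\<psi>2 False)"
       and pC = "bl1 (\<psi>3 True) (\<psi>3 False)" and qC = "bl2 (\<psi>3 True) (\<psi>3 False)" and sC = "bl3 (\<psi>3 True) (\<psi>3 False)"])
    using u bloch_norm bloch_dot by (simp_all add: power2_eq_square)
qed

theorem mainTheorem13:
  fixes \<eta> :: real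
  assumes "0 \<le> \<eta>"
  shows "(local_positive (w \<eta>) \<longleftrightarrow> \<eta> \<le> 2/3)
     \<and> ptrA (w \<eta>) = werner2 \<eta> \<and> ptrB (w \<eta>) = werner2 \<eta> \<and> ptrC (w \<eta>) = werner2 \<eta>"
proof -
  have "local_positive (w \<eta>) \<longleftrightarrow> \<eta> \<le> 2/3"
  proof
    assume lp: "local_positive (w \<eta>)"
    define a where "a = (\<lambda>b::bool. if b then (1::complex) else 0)"
    define b where "b = (\<lambda>c::bool. if c then (1/2::complex) else complex_of_real (sqrt 3 / 2))"
    define c where "c = (\<lambda>d::bool. if d then (1/2::complex) else complex_of_real (- sqrt 3 / 2))"
    have s3: "sqrt 3 * sqrt 3 = (3::real)" by simp
    have ua: "unit_vec a" unfolding unit_iff a_def by simp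
    have ub: "unit_vec b" unfolding unit_iff b_def by (simp add: power2_eq_square norm_divide s3)
    have uc: "unit_vec c" unfolding unit_iff c_def by (simp add: power2_eq_square norm_divide s3)
    have "0 \<le> expect3 (w \<eta>) (prod_state a b c)" using lp ua ub uc unfolding local_positive_def by blast
    also have "expect3 (w \<eta>) (prod_state a b c) = complex_of_real (1/8 - 3*\<eta>/16)"
    proof -
      have e: "cnj (1/2::complex) * (1/2) + cnj (complex_of_real (sqrt 3 / 2)) * complex_of_real (- sqrt 3 / 2) = - 1/2"
        by (simp add: power2_eq_square of_real_mult[symmetric] del: of_real_mult)
      have n3: "(cmod (complex_of_real (sqrt 3 / 2)))^2 = 3/4" "(cmod (complex_of_real (- sqrt 3 / 2)))^2 = 3/4"
        by (simp_all add: power2_eq_square norm_divide s3)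
      show ?thesis unfolding expect_w a_def b_def c_def using e n3
        by (simp add: power2_eq_square)
    qed
    finally show "\<eta> \<le> 2/3" unfolding ofreal_nn by simp
  next
    assume le: "\<eta> \<le> 2/3"
    show "local_positive (w \<eta>)" unfolding local_positive_def
    proof (intro allI impI)
      fix \<psi>1 \<psi>2 \<psi>3 assume u1: "unit_vec \<psi>1" and u2: "unit_vec \<psi>2" and u3: "unit_vec \<psi>3"
      have u: "(cmod (\<psi>1 True))^2 + (cmod (\<psi>1 False))^2 = 1" "(cmod (\<psi>2 True))^2 + (cmod (\<psi>2 False))^2 = 1"
        "(cmod (\<psi>3 True))^2 + (cmod (\<psi>3 False))^2 = 1" using u1 u2 u3 unit_iff by auto
      note ob = overlap_bound[OF u1 u2 u3]
      have gen: "0 \<le> (1/8 - 3*\<eta>/8) * 1 * 1 * 1 + \<eta>/4 * (T1 * 1 + T2 * 1 + T3 * 1)"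
        if "3/4 \<le> T1 + T2 + T3" for T1 T2 T3 :: real
      proof -
        have "\<eta> * (3/4) \<le> \<eta> * (T1 + T2 + T3)" using mult_left_mono[OF that assms] .
        moreover have "(1/8 - 3*\<eta>/8) * 1 * 1 * 1 + \<eta>/4 * (T1 * 1 + T2 * 1 + T3 * 1)
           = 1/8 - 3*\<eta>/8 + (\<eta> * (T1 + T2 + T3))/4" by (simp add: algebra_simps)
        ultimately show ?thesis using le by linarith
      qed
      show "0 \<le> expect3 (w \<eta>) (prod_state \<psi>1 \<psi>2 \<psi>3)"
        unfolding expect_w ofreal_nn u by (rule gen[OF ob])
    qed
  qed
  then show ?thesis using ptr_ok by simp
qed

end
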